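(* Let $X$ be a real normed space and let $w$ denote the weak topology on $X$ (generated by all norm-continuous linear functionals on $X$). Then every topologically linearly independent subset of $(X,w)$ is finite.
   Context: A subset $A\subseteq X\setminus\{0\}$ of a topological vector space $X$ is topologically linearly independent if for every neighborhood $W$ of $0$ there is a neighborhood $U$ of $0$ such that for every finite $F\subseteq A$ and reals $\{r_a: a\in F\}$, $\sum_{a\in F}r_a a\in U$ implies $r_a a\in W$ for all $a\in F$. *)

theory Defs
  imports "HOL-Analysis.Analysis"
begin

definition weak_topology :: "('a::real_normed_vector) topology" where
  "weak_topology = topology_generated_by
     {f -` U | f U. bounded_linear (f :: 'a \<Rightarrow> real) \<and> open U}"

definition nhd0 :: "('a::zero) topology \<Rightarrow> 'a set \<Rightarrow> bool" where
  "nhd0 T W \<longleftrightarrow> (\<exists>V. openin T V \<and> 0 \<in> V \<and> V \<subseteq> W)"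

definition top_lin_indep :: "('a::real_vector) topology \<Rightarrow> 'a set \<Rightarrow> bool" where
  "top_lin_indep T A \<longleftrightarrow> A \<subseteq> UNIV - {0} \<and>
     (\<forall>W. nhd0 T W \<longrightarrow> (\<exists>U. nhd0 T U \<and>
        (\<forall>F r. finite F \<longrightarrow> F \<subseteq> A \<longrightarrow> (\<Sum>a\<in>F. r a *\<^sub>R a) \<in> U \<longrightarrow>
           (\<forall>a\<in>F. r a *\<^sub>R a \<in> W))))"

end

theory Submission
  imports "HOL-Analysis.Analysis" Defs
begin


lemma hb_ext_step:
  fixes G :: "('a::real_normed_vector \<times> real) set"
  assumes sc: "\<And>x a c. (x,a)\<in>G \<Longrightarrow> (c *\<^sub>R x, c*a)\<in>G"
    and add: "\<And>x a z b. (x,a)\<in>G \<Longrightarrow> (z,b)\<in>G \<Longrightarrow> (x+z,a+b)\<in>G"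
    and dom: "\<And>x a. (x,a)\<in>G \<Longrightarrow> a \<le> norm x"
    and z: "(0,0) \<in> G"
  shows "\<exists>c. \<forall>x a t. (x,a)\<in>G \<longrightarrow> a + t*c \<le> norm (x + t *\<^sub>R y)"
proof -
  have key: "a1 - norm (x1 - y) \<le> norm (x2 + y) - a2" if "(x1,a1)\<in>G" "(x2,a2)\<in>G" for x1 a1 x2 a2
  proof -
    have "a1 + a2 \<le> norm (x1 + x2)" using dom[OF add[OF that]] .
    also have "x1 + x2 = (x1 - y) + (x2 + y)" by simp
    also have "norm \<dots> \<le> norm (x1 - y) + norm (x2 + y)" by (rule norm_triangle_ineq)
    finally show ?thesis by simp
  qed
  define S where "S = {a - norm (x - y) | x a. (x,a)\<in>G}"
  have Sne: "S \<noteq> {}" using z unfolding S_def by blast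
  have Sb: "z \<le> norm (x2 + y) - a2" if "z \<in> S" "(x2,a2)\<in>G" for z x2 a2
    using that key unfolding S_def by blast
  have bdd: "bdd_above S" using Sb[OF _ z] by (auto simp: bdd_above_def)
  define c where "c = Sup S"
  have c1: "a - norm (x - y) \<le> c" if "(x,a)\<in>G" for x a
    unfolding c_def by (rule cSup_upper[OF _ bdd]) (use that S_def in blast)
  have c2: "c \<le> norm (x + y) - a" if "(x,a)\<in>G" for x a
    unfolding c_def by (rule cSup_least[OF Sne]) (use Sb that in blast)
  show ?thesis
  proof (intro exI allI impI)
    fix x a and t :: real assume xa: "(x,a)\<in>G"
    consider "t > 0" | "t = 0" | "t < 0" by linarith
    then show "a + t*c \<le> norm (x + t *\<^sub>R y)"
    proof cases
      case 1
      have "c \<le> norm (inverse t *\<^sub>R x + y) - inverse t * a" using c2[OF sc[OF xa]] .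
      then have "t * c \<le> t * norm (inverse t *\<^sub>R x + y) - a"
        using 1 by (simp add: field_simps)
      also have "t * norm (inverse t *\<^sub>R x + y) = norm (t *\<^sub>R (inverse t *\<^sub>R x + y))"
        using 1 by simp
      also have "t *\<^sub>R (inverse t *\<^sub>R x + y) = x + t *\<^sub>R y"
        using 1 by (simp add: scaleR_add_right)
      finally show ?thesis by simp
    next
      case 2 then show ?thesis using dom[OF xa] by simp
    next
      case 3
      define u where "u = - t"
      have u: "u > 0" using 3 u_def by simp
      have "inverse u * a - norm (inverse u *\<^sub>R x - y) \<le> c" using c1[OF sc[OF xa]] .
      then have "a - u * norm (inverse u *\<^sub>R x - y) \<le> u * c"
        using u by (simp add: field_simps)
      also have "u * norm (inverse u *\<^sub>R x - y) = norm (u *\<^sub>R (inverse u *\<^sub>R x - y))"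
        using u by simp
      also have "u *\<^sub>R (inverse u *\<^sub>R x - y) = x + t *\<^sub>R y"
        using u by (simp add: scaleR_diff_right u_def)
      finally show ?thesis by (simp add: u_def)
    qed
  qed
qed

lemma hahn_banach_norm:
  fixes s :: "'a::real_normed_vector"
  shows "\<exists>\<phi>. bounded_linear \<phi> \<and> \<phi> s = norm s \<and> (\<forall>y. \<bar>\<phi> y\<bar> \<le> norm y)"
proof -
  define Fam where "Fam = {G :: ('a \<times> real) set.
     (\<forall>x a c. (x,a)\<in>G \<longrightarrow> (c *\<^sub>R x, c*a)\<in>G) \<and>
     (\<forall>x a z b. (x,a)\<in>G \<longrightarrow> (z,b)\<in>G \<longrightarrow> (x+z,a+b)\<in>G) \<and>
     (\<forall>x a. (x,a)\<in>G \<longrightarrow> a \<le> norm x) \<and> (s, norm s) \<in> G}"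
  define G0 where "G0 = range (\<lambda>c. (c *\<^sub>R s, c * norm s))"
  have G0: "G0 \<in> Fam"
    unfolding Fam_def G0_def
  proof (intro CollectI conjI allI impI)
    fix x a c assume "(x,a) \<in> range (\<lambda>c. (c *\<^sub>R s, c * norm s))"
    then obtain d where "x = d *\<^sub>R s" "a = d * norm s" by blast
    then show "(c *\<^sub>R x, c*a) \<in> range (\<lambda>c. (c *\<^sub>R s, c * norm s))"
      by (intro range_eqI[of _ _ "c*d"]) auto
  next
    fix x a z b assume "(x,a) \<in> range (\<lambda>c. (c *\<^sub>R s, c * norm s))" "(z,b) \<in> range (\<lambda>c. (c *\<^sub>R s, c * norm s))"
    then obtain d e where "x = d *\<^sub>R s" "a = d * norm s" "z = e *\<^sub>R s" "b = e * norm s" by blast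
    then show "(x+z, a+b) \<in> range (\<lambda>c. (c *\<^sub>R s, c * norm s))"
      by (intro range_eqI[of _ _ "d+e"]) (auto simp: scaleR_add_left algebra_simps)
  next
    fix x a assume "(x,a) \<in> range (\<lambda>c. (c *\<^sub>R s, c * norm s))"
    then obtain d where "x = d *\<^sub>R s" "a = d * norm s" by blast
    then show "a \<le> norm x" by (simp add: mult_right_mono)
  next
    show "(s, norm s) \<in> range (\<lambda>c. (c *\<^sub>R s, c * norm s))"
      by (intro range_eqI[of _ _ 1]) auto
  qed
  have "\<exists>M\<in>Fam. \<forall>X\<in>Fam. M \<subseteq> X \<longrightarrow> X = M"
  proof (rule Zorn_Lemma2, intro ballI)
    fix C assume C: "C \<in> chains Fam"
    show "\<exists>U\<in>Fam. \<forall>X\<in>C. X \<subseteq> U"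
    proof (cases "C = {}")
      case True then show ?thesis using G0 by blast
    next
      case False
      have CF: "C \<subseteq> Fam" and ch: "\<And>X Y. X\<in>C \<Longrightarrow> Y\<in>C \<Longrightarrow> X \<subseteq> Y \<or> Y \<subseteq> X"
        using C unfolding chains_def chain_subset_def by blast+
      have "\<Union>C \<in> Fam"
        unfolding Fam_def
      proof (intro CollectI conjI allI impI)
        fix x a c assume "(x,a) \<in> \<Union>C"
        then obtain X where "X\<in>C" "(x,a)\<in>X" by blast
        then show "(c *\<^sub>R x, c*a) \<in> \<Union>C" using CF unfolding Fam_def by blast
      next
        fix x a z b assume "(x,a) \<in> \<Union>C" "(z,b) \<in> \<Union>C"
        then obtain X Y where XY: "X\<in>C" "(x,a)\<in>X" "Y\<in>C" "(z,b)\<in>Y" by blast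
        have FamD: "\<And>X x a z b. X\<in>Fam \<Longrightarrow> (x,a)\<in>X \<Longrightarrow> (z,b)\<in>X \<Longrightarrow> (x+z,a+b)\<in>X"
          unfolding Fam_def by blast
        from XY consider "X \<subseteq> Y" | "Y \<subseteq> X" using ch by blast
        then show "(x+z, a+b) \<in> \<Union>C"
        proof cases
          case 1
          have "Y \<in> Fam" "(x,a) \<in> Y" using XY CF 1 by blast+
          then have "(x+z,a+b) \<in> Y" using FamD XY(4) by blast
          then show ?thesis using XY(3) by blast
        next
          case 2
          have "X \<in> Fam" "(z,b) \<in> X" using XY CF 2 by blast+
          then have "(x+z,a+b) \<in> X" using FamD XY(2) by blast
          then show ?thesis using XY(1) by blast
        qed
      next
        fix x a assume "(x,a) \<in> \<Union>C"
        then show "a \<le> norm x" using CF unfolding Fam_def by blast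
      next
        show "(s, norm s) \<in> \<Union>C" using False CF unfolding Fam_def by blast
      qed
      then show ?thesis by blast
    qed
  qed
  then obtain G where GF: "G \<in> Fam" and max: "\<And>X. X\<in>Fam \<Longrightarrow> G \<subseteq> X \<Longrightarrow> X = G" by blast
  have sc: "\<And>x a c. (x,a)\<in>G \<Longrightarrow> (c *\<^sub>R x, c*a)\<in>G"
    and add: "\<And>x a z b. (x,a)\<in>G \<Longrightarrow> (z,b)\<in>G \<Longrightarrow> (x+z,a+b)\<in>G"
    and dom: "\<And>x a. (x,a)\<in>G \<Longrightarrow> a \<le> norm x"
    and sG: "(s, norm s) \<in> G" using GF unfolding Fam_def by blast+
  have z: "(0,0) \<in> G" using sc[OF sG, of 0] by simp
  have uniq: "a = b" if "(x,a)\<in>G" "(x,b)\<in>G" for x a b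
  proof -
    have "(0, a - b) \<in> G" using add[OF that(1) sc[OF that(2), of "-1"]] by simp
    from dom[OF this] dom[OF sc[OF this, of "-1"]] show ?thesis by simp
  qed
  have total: "\<exists>a. (y,a)\<in>G" for y
  proof (rule ccontr)
    assume ny: "\<nexists>a. (y,a)\<in>G"
    obtain c where c: "\<And>x a t. (x,a)\<in>G \<Longrightarrow> a + t*c \<le> norm (x + t *\<^sub>R y)"
      using hb_ext_step[OF sc add dom z, of y] by blast
    define G' where "G' = {p. \<exists>x a t. (x,a)\<in>G \<and> p = (x + t *\<^sub>R y, a + t*c)}"
    have "G' \<in> Fam"
      unfolding Fam_def
    proof (intro CollectI conjI allI impI)
      fix x a d assume "(x,a) \<in> G'"
      then obtain x1 a1 t where "(x1,a1)\<in>G" "x = x1 + t *\<^sub>R y" "a = a1 + t*c" unfolding G'_def by blast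
      then have "(d *\<^sub>R x1, d*a1)\<in>G" "(d *\<^sub>R x, d*a) = (d *\<^sub>R x1 + (d*t) *\<^sub>R y, d*a1 + (d*t)*c)"
        using sc[of x1 a1 d] by (auto simp: scaleR_add_right algebra_simps)
      then show "(d *\<^sub>R x, d*a) \<in> G'" unfolding G'_def by blast
    next
      fix x a z b assume "(x,a) \<in> G'" "(z,b) \<in> G'"
      then obtain x1 a1 t x2 a2 u where "(x1,a1)\<in>G" "x = x1 + t *\<^sub>R y" "a = a1 + t*c"
        "(x2,a2)\<in>G" "z = x2 + u *\<^sub>R y" "b = a2 + u*c" unfolding G'_def by blast
      then have "(x1+x2, a1+a2)\<in>G" "(x+z, a+b) = ((x1+x2) + (t+u) *\<^sub>R y, (a1+a2) + (t+u)*c)"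
        by (auto simp: add scaleR_add_left algebra_simps)
      then show "(x+z, a+b) \<in> G'" unfolding G'_def by blast
    next
      fix x a assume "(x,a) \<in> G'"
      then show "a \<le> norm x" unfolding G'_def using c by blast
    next
      show "(s, norm s) \<in> G'" unfolding G'_def
        by (intro CollectI exI[of _ s] exI[of _ "norm s"] exI[of _ 0]) (simp add: sG)
    qed
    moreover have "G \<subseteq> G'"
    proof
      fix p assume "p \<in> G"
      then show "p \<in> G'" unfolding G'_def
        by (intro CollectI exI[of _ "fst p"] exI[of _ "snd p"] exI[of _ 0]) simp
    qed
    moreover have "(y, c) \<in> G'" unfolding G'_def
      by (intro CollectI exI[of _ 0] exI[of _ 0] exI[of _ 1]) (simp add: z)
    ultimately show False using max ny by blast
  qed
  define \<phi> where "\<phi> y = (SOME a. (y,a)\<in>G)" for y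
  have phi: "(y, \<phi> y) \<in> G" for y unfolding \<phi>_def using total by (rule someI_ex)
  have padd: "\<phi> (x + y) = \<phi> x + \<phi> y" for x y
    using uniq[OF phi add[OF phi phi]] .
  have psc: "\<phi> (r *\<^sub>R x) = r *\<^sub>R \<phi> x" for r x
    using uniq[OF phi sc[OF phi]] by simp
  have pb: "\<bar>\<phi> y\<bar> \<le> norm y" for y
  proof -
    have "\<phi> y \<le> norm y" using dom[OF phi] .
    moreover have "- \<phi> y \<le> norm y" using dom[OF phi, of "-y"] psc[of "-1" y] by simp
    ultimately show ?thesis by linarith
  qed
  have "bounded_linear \<phi>"
    by (rule bounded_linear_intro[where K=1]) (use padd psc pb in auto)
  moreover have "\<phi> s = norm s" using uniq[OF phi sG] .
  ultimately show ?thesis using pb by blast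
qed


lemma weak_open_local:
  assumes "generate_topology_on {f -` U | f U. bounded_linear (f :: 'a::real_normed_vector \<Rightarrow> real) \<and> open U} V"
  shows "\<forall>x\<in>V. \<exists>G::('a \<Rightarrow> real) set. finite G \<and> (\<forall>g\<in>G. bounded_linear g) \<and> {y. \<forall>g\<in>G. g y = g x} \<subseteq> V"
  using assms
proof (induction rule: generate_topology_on.induct)
  case Empty then show ?case by simp
next
  case (Int a b)
  show ?case
  proof
    fix x assume "x \<in> a \<inter> b"
    then have xa: "x \<in> a" and xb: "x \<in> b" by auto
    obtain G1 :: "('a \<Rightarrow> real) set" where "finite G1" "\<forall>g\<in>G1. bounded_linear g" "{y. \<forall>g\<in>G1. g y = g x} \<subseteq> a"
      using bspec[OF Int.IH(1) xa] by (elim exE conjE)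
    moreover obtain G2 :: "('a \<Rightarrow> real) set" where "finite G2" "\<forall>g\<in>G2. bounded_linear g" "{y. \<forall>g\<in>G2. g y = g x} \<subseteq> b"
      using bspec[OF Int.IH(2) xb] by (elim exE conjE)
    moreover have "{y. \<forall>g\<in>G1 \<union> G2. g y = g x} \<subseteq> {y. \<forall>g\<in>G1. g y = g x} \<inter> {y. \<forall>g\<in>G2. g y = g x}"
      by blast
    ultimately have "finite (G1 \<union> G2) \<and> (\<forall>g\<in>G1 \<union> G2. bounded_linear g) \<and> {y. \<forall>g\<in>G1 \<union> G2. g y = g x} \<subseteq> a \<inter> b"
      by blast
    then show "\<exists>G::('a \<Rightarrow> real) set. finite G \<and> (\<forall>g\<in>G. bounded_linear g) \<and> {y. \<forall>g\<in>G. g y = g x} \<subseteq> a \<inter> b"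
      by (rule exI)
  qed
next
  case (UN K)
  show ?case
  proof
    fix x assume "x \<in> \<Union>K"
    then obtain k where k: "k \<in> K" "x \<in> k" by blast
    obtain G :: "('a \<Rightarrow> real) set" where "finite G" "\<forall>g\<in>G. bounded_linear g" "{y. \<forall>g\<in>G. g y = g x} \<subseteq> k"
      using bspec[OF UN.IH[OF k(1)] k(2)] by (elim exE conjE)
    then show "\<exists>G::('a \<Rightarrow> real) set. finite G \<and> (\<forall>g\<in>G. bounded_linear g) \<and> {y. \<forall>g\<in>G. g y = g x} \<subseteq> \<Union>K"
      using k(1) by blast
  qed
next
  case (Basis s)
  then have "\<exists>f U. s = f -` U \<and> bounded_linear (f :: 'a \<Rightarrow> real) \<and> open U"
    by (simp only: mem_Collect_eq)
  then obtain f :: "'a \<Rightarrow> real" and U where s: "s = f -` U" "bounded_linear f" "open U"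
    by (elim exE conjE)
  show ?case
  proof
    fix x assume "x \<in> s"
    then have "{y. \<forall>g\<in>{f}. g y = g x} \<subseteq> s" using s(1) by auto
    moreover have "finite {f}" "\<forall>g\<in>{f}. bounded_linear g" using s(2) by auto
    ultimately show "\<exists>G::('a \<Rightarrow> real) set. finite G \<and> (\<forall>g\<in>G. bounded_linear g) \<and> {y. \<forall>g\<in>G. g y = g x} \<subseteq> s"
      by blast
  qed
qed

lemma weak_nhd0:
  fixes W :: "'a::real_normed_vector set"
  assumes "nhd0 weak_topology W"
  shows "\<exists>G::('a \<Rightarrow> real) set. finite G \<and> (\<forall>g\<in>G. bounded_linear g) \<and> {y. \<forall>g\<in>G. g y = 0} \<subseteq> W"
proof -
  obtain V where V: "openin weak_topology V" "0 \<in> V" "V \<subseteq> W" using assms unfolding nhd0_def by blast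
  have "generate_topology_on {f -` U | f U. bounded_linear (f :: 'a \<Rightarrow> real) \<and> open U} V"
    using V(1) unfolding weak_topology_def by (rule openin_topology_generated_by)
  from bspec[OF weak_open_local[OF this] V(2)] obtain G :: "('a \<Rightarrow> real) set" where
    G: "finite G" "\<forall>g\<in>G. bounded_linear g" "{y. \<forall>g\<in>G. g y = g 0} \<subseteq> V" by (elim exE conjE)
  have z: "\<forall>g\<in>G. g 0 = 0" using G(2) by (simp add: linear_simps)
  have "{y. \<forall>g\<in>G. g y = 0} \<subseteq> {y. \<forall>g\<in>G. g y = g 0}" using z by auto
  then have "{y. \<forall>g\<in>G. g y = 0} \<subseteq> V" using G(3) by (rule subset_trans)
  then have "{y. \<forall>g\<in>G. g y = 0} \<subseteq> W" using V(3) by (rule subset_trans)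
  then show ?thesis using G(1,2) by (intro exI[of _ G] conjI)
qed

lemma weak_nhd0_strip:
  fixes g :: "'a::real_normed_vector \<Rightarrow> real"
  assumes "bounded_linear g"
  shows "nhd0 weak_topology {x. \<bar>g x\<bar> < 1}"
proof -
  have eq: "{x. \<bar>g x\<bar> < 1} = g -` {-1<..<1}" by auto
  have "openin weak_topology {x. \<bar>g x\<bar> < 1}"
    unfolding weak_topology_def eq
  proof (rule topology_generated_by_Basis)
    have "\<exists>f U. g -` {-1<..<1} = f -` U \<and> bounded_linear f \<and> open (U::real set)"
      using assms by (intro exI[of _ g] exI[of _ "{-1<..<1::real}"]) simp
    then show "g -` {-1<..<1} \<in> {f -` U | f U. bounded_linear (f :: 'a \<Rightarrow> real) \<and> open U}"
      by (simp only: mem_Collect_eq)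
  qed
  moreover have "0 \<in> {x. \<bar>g x\<bar> < 1}" using assms by (simp add: linear_simps)
  ultimately show ?thesis unfolding nhd0_def by blast
qed

lemma kernel_lemma:
  fixes G :: "('a::real_vector \<Rightarrow> real) set"
  assumes "finite G"
  shows "finite F \<Longrightarrow> card G < card F \<Longrightarrow> (\<forall>h\<in>G. linear h) \<Longrightarrow>
     \<exists>r. (\<exists>i\<in>F. r i \<noteq> 0) \<and> (\<forall>h\<in>G. h (\<Sum>i\<in>F. r i *\<^sub>R v i) = 0)"
  using assms
proof (induction G arbitrary: F v rule: finite_induct)
  case empty
  then have "F \<noteq> {}" by auto
  then show ?case by (intro exI[of _ "\<lambda>_. 1"]) auto
next
  case (insert h G)
  have lin: "linear h" and linG: "\<forall>h\<in>G. linear h" using insert.prems by auto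
  have cardG: "card G + 1 < card F" using insert.prems insert.hyps by simp
  show ?case
  proof (cases "\<forall>i\<in>F. h (v i) = 0")
    case True
    obtain r where r: "\<exists>i\<in>F. r i \<noteq> 0" "\<forall>h\<in>G. h (\<Sum>i\<in>F. r i *\<^sub>R v i) = 0"
      using insert.IH[OF insert.prems(1) _ linG, of v] cardG by auto
    have "h (\<Sum>i\<in>F. r i *\<^sub>R v i) = (\<Sum>i\<in>F. r i * h (v i))"
      using lin by (simp add: linear_sum linear_scale)
    also have "\<dots> = 0" using True by simp
    finally show ?thesis using r by auto
  next
    case False
    then obtain j where j: "j \<in> F" "h (v j) \<noteq> 0" by blast
    define F' where "F' = F - {j}"
    define w where "w i = v i - (h (v i) / h (v j)) *\<^sub>R v j" for i
    have fF': "finite F'" using insert.prems F'_def by simp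
    have cF': "card G < card F'" using cardG j insert.prems(1) by (simp add: F'_def)
    obtain s where s: "\<exists>i\<in>F'. s i \<noteq> 0" "\<forall>h\<in>G. h (\<Sum>i\<in>F'. s i *\<^sub>R w i) = 0"
      using insert.IH[OF fF' cF' linG, of w] by blast
    define r where "r i = (if i = j then - (\<Sum>k\<in>F'. s k * h (v k) / h (v j)) else s i)" for i
    have hw: "h (w i) = 0" for i
      using lin j(2) unfolding w_def by (simp add: linear_diff linear_scale)
    have e1: "(\<Sum>i\<in>F. r i *\<^sub>R v i) = r j *\<^sub>R v j + (\<Sum>i\<in>F'. r i *\<^sub>R v i)"
      using j insert.prems(1) unfolding F'_def by (simp add: sum.remove)
    have e2: "(\<Sum>i\<in>F'. r i *\<^sub>R v i) = (\<Sum>i\<in>F'. s i *\<^sub>R v i)"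
      by (rule sum.cong) (auto simp: r_def F'_def)
    have e3: "(\<Sum>i\<in>F'. s i *\<^sub>R w i) = (\<Sum>i\<in>F'. s i *\<^sub>R v i) - (\<Sum>i\<in>F'. (s i * h (v i) / h (v j)) *\<^sub>R v j)"
      unfolding w_def by (simp add: scaleR_diff_right sum_subtractf)
    have e4: "(\<Sum>i\<in>F'. (s i * h (v i) / h (v j)) *\<^sub>R v j) = (\<Sum>i\<in>F'. s i * h (v i) / h (v j)) *\<^sub>R v j"
      by (simp add: scaleR_sum_left)
    have sumeq: "(\<Sum>i\<in>F. r i *\<^sub>R v i) = (\<Sum>i\<in>F'. s i *\<^sub>R w i)"
      unfolding e1 e2 e3 e4 by (simp add: r_def)
    have hz: "h (\<Sum>i\<in>F'. s i *\<^sub>R w i) = 0"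
      using lin hw by (simp add: linear_sum linear_scale)
    obtain i0 where "i0 \<in> F'" "s i0 \<noteq> 0" using s by blast
    then have i0: "r i0 \<noteq> 0" "i0 \<in> F" by (auto simp: r_def F'_def)
    have "\<forall>h'\<in>insert h G. h' (\<Sum>i\<in>F. r i *\<^sub>R v i) = 0"
      unfolding sumeq using s(2) hz by blast
    then show ?thesis using i0 by blast
  qed
qed

lemma finite_support:
  fixes A :: "'a::real_normed_vector set" and g :: "'a \<Rightarrow> real"
  assumes tli: "top_lin_indep weak_topology A" and g: "bounded_linear g"
  shows "finite {a\<in>A. g a \<noteq> 0}"
proof (rule ccontr)
  assume inf: "infinite {a\<in>A. g a \<noteq> 0}"
  define W where "W = {x. \<bar>g x\<bar> < 1}"
  have tl2: "\<forall>W. nhd0 weak_topology W \<longrightarrow> (\<exists>U. nhd0 weak_topology U \<and>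
        (\<forall>F r. finite F \<longrightarrow> F \<subseteq> A \<longrightarrow> (\<Sum>a\<in>F. r a *\<^sub>R a) \<in> U \<longrightarrow>
           (\<forall>a\<in>F. r a *\<^sub>R a \<in> W)))"
    using tli unfolding top_lin_indep_def by (rule conjunct2)
  have "\<exists>U. nhd0 weak_topology U \<and>
        (\<forall>F r. finite F \<longrightarrow> F \<subseteq> A \<longrightarrow> (\<Sum>a\<in>F. r a *\<^sub>R a) \<in> U \<longrightarrow>
           (\<forall>a\<in>F. r a *\<^sub>R a \<in> W))"
    using mp[OF spec[OF tl2, of W]] weak_nhd0_strip[OF g] unfolding W_def by simp
  then obtain U where U: "nhd0 weak_topology U" and P0: "\<forall>F r. finite F \<longrightarrow> F \<subseteq> A \<longrightarrow> (\<Sum>a\<in>F. r a *\<^sub>R a) \<in> U \<longrightarrow>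
           (\<forall>a\<in>F. r a *\<^sub>R a \<in> W)" by (elim exE conjE)
  have P: "\<forall>a\<in>F. \<bar>g (r a *\<^sub>R a)\<bar> < 1" if "finite F" "F \<subseteq> A" "(\<Sum>a\<in>F. r a *\<^sub>R a) \<in> U" for F r
    using P0 that unfolding W_def by simp
  obtain G :: "('a \<Rightarrow> real) set" where G: "finite G" "\<forall>h\<in>G. bounded_linear h" "{y. \<forall>h\<in>G. h y = 0} \<subseteq> U"
    using weak_nhd0[OF U] by blast
  obtain F where F: "finite F" "card F = card G + 1" "F \<subseteq> {a\<in>A. g a \<noteq> 0}"
    using infinite_arbitrarily_large[OF inf] by blast
  have linG: "\<forall>h\<in>G. linear h" using G(2) bounded_linear.linear by blast
  obtain r where r: "\<exists>i\<in>F. r i \<noteq> 0" "\<forall>h\<in>G. h (\<Sum>i\<in>F. r i *\<^sub>R id i) = 0"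
    using kernel_lemma[of G F id] G(1) F(1,2) linG by auto
  obtain a where a: "a \<in> F" "r a \<noteq> 0" using r by blast
  have ga: "g a \<noteq> 0" using a F by auto
  define t where "t = 1 / (r a * g a)"
  have "(\<Sum>i\<in>F. (t * r i) *\<^sub>R i) \<in> U"
  proof -
    have "(\<Sum>i\<in>F. (t * r i) *\<^sub>R i) = t *\<^sub>R (\<Sum>i\<in>F. r i *\<^sub>R i)"
      by (simp add: scaleR_sum_right)
    moreover have "h (t *\<^sub>R (\<Sum>i\<in>F. r i *\<^sub>R i)) = 0" if "h \<in> G" for h
      using r(2) that linG by (simp add: linear_scale)
    ultimately show ?thesis using G(3) by auto
  qed
  have "F \<subseteq> A" using F(3) by blast
  from P[OF F(1) this \<open>(\<Sum>i\<in>F. (t * r i) *\<^sub>R i) \<in> U\<close>] a(1) have "\<bar>g ((t * r a) *\<^sub>R a)\<bar> < 1" by simp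
  moreover have "g ((t * r a) *\<^sub>R a) = 1"
    using g a(2) ga by (simp add: linear_simps t_def)
  ultimately show False by simp
qed

theorem proposition4p7:
  fixes A :: "'a::real_normed_vector set"
  assumes "top_lin_indep weak_topology A"
  shows "finite A"
proof (rule ccontr)
  assume inf: "infinite A"
  have nz: "0 \<notin> A" using assms unfolding top_lin_indep_def by auto
  have fs: "\<And>g :: 'a \<Rightarrow> real. bounded_linear g \<Longrightarrow> finite {a\<in>A. g a \<noteq> 0}" using finite_support[OF assms] .
  have "\<forall>s. \<exists>\<phi>. bounded_linear \<phi> \<and> \<phi> s = norm s \<and> (\<forall>y. \<bar>\<phi> y\<bar> \<le> norm y)"
    using hahn_banach_norm by blast
  then obtain \<phi> :: "'a \<Rightarrow> 'a \<Rightarrow> real" where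
    \<phi>: "\<And>s. bounded_linear (\<phi> s)" "\<And>s. \<phi> s s = norm s" "\<And>s y. \<bar>\<phi> s y\<bar> \<le> norm y"
    by metis
  define pick where "pick S = (SOME a. a \<in> A \<and> a \<notin> S \<and> (\<forall>s\<in>S. \<phi> s a = 0))" for S
  have pick: "pick S \<in> A \<and> pick S \<notin> S \<and> (\<forall>s\<in>S. \<phi> s (pick S) = 0)" if "finite S" for S
  proof -
    have "finite (S \<union> (\<Union>s\<in>S. {a\<in>A. \<phi> s a \<noteq> 0}))" using that fs \<phi>(1) by auto
    then have "\<not> A \<subseteq> S \<union> (\<Union>s\<in>S. {a\<in>A. \<phi> s a \<noteq> 0})" using inf finite_subset by blast
    then have "\<exists>a. a \<in> A \<and> a \<notin> S \<and> (\<forall>s\<in>S. \<phi> s a = 0)" by blast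
    then show ?thesis unfolding pick_def by (rule someI_ex)
  qed
  define Ss where "Ss = rec_nat {} (\<lambda>n S. insert (pick S) S)"
  have Ss0: "Ss 0 = {}" and SsS: "\<And>n. Ss (Suc n) = insert (pick (Ss n)) (Ss n)"
    by (simp_all add: Ss_def)
  define x where "x n = pick (Ss n)" for n
  have Ss_eq: "Ss n = x ` {..<n}" for n
  proof (induction n)
    case 0 then show ?case by (simp add: Ss0)
  next
    case (Suc n) then show ?case by (simp add: SsS lessThan_Suc x_def)
  qed
  have xp: "x n \<in> A" "x n \<notin> x ` {..<n}" "\<And>i. i < n \<Longrightarrow> \<phi> (x i) (x n) = 0" for n
  proof -
    have "finite (Ss n)" using Ss_eq by simp
    from pick[OF this] have "x n \<in> A \<and> x n \<notin> Ss n \<and> (\<forall>s\<in>Ss n. \<phi> s (x n) = 0)"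
      by (simp add: x_def)
    then show "x n \<in> A" "x n \<notin> x ` {..<n}" "\<And>i. i < n \<Longrightarrow> \<phi> (x i) (x n) = 0"
      unfolding Ss_eq by auto
  qed
  have inj: "inj x"
  proof (rule linorder_injI)
    fix i n :: nat assume "i < n"
    then have "x i \<in> x ` {..<n}" by simp
    then show "x i \<noteq> x n" using xp(2)[of n] by auto
  qed
  have xnz: "x n \<noteq> 0" for n using nz xp(1)[of n] by auto
  define c where "c j y = (1/3::real)^j * \<phi> (x j) y" for j y
  have cb: "norm (c j y) \<le> (1/3)^j * norm y" for j y
    unfolding c_def real_norm_def abs_mult using mult_left_mono[OF \<phi>(3)[of "x j" y], of "(1/3::real)^j"] by simp
  have geo: "summable (\<lambda>j. (1/3::real)^j)" by (rule summable_geometric) simp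
  have geos: "(\<Sum>j. (1/3::real)^j) = 3/2" by (subst suminf_geometric) auto
  have gsum: "summable (\<lambda>j. (1/3::real)^j * norm y)" for y
    by (rule summable_mult2[OF geo])
  have csum: "summable (\<lambda>j. c j y)" for y
    by (rule summable_comparison_test'[OF gsum cb])
  define g where "g y = (\<Sum>j. c j y)" for y
  have cadd: "c j (y + z) = c j y + c j z" for j y z
    using \<phi>(1) unfolding c_def by (simp add: linear_simps algebra_simps)
  have cscale: "c j (r *\<^sub>R y) = r * c j y" for j r y
    using \<phi>(1) unfolding c_def by (simp add: linear_simps algebra_simps)
  have "bounded_linear g"
  proof (rule bounded_linear_intro[where K="3/2"])
    fix y z show "g (y + z) = g y + g z"
      unfolding g_def cadd by (rule suminf_add[OF csum csum, symmetric])
  next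
    fix r y show "g (r *\<^sub>R y) = r *\<^sub>R g y"
      unfolding g_def cscale using suminf_mult[OF csum, of r] by simp
  next
    fix y
    have "norm (g y) \<le> (\<Sum>j. (1/3::real)^j * norm y)"
      unfolding g_def by (rule norm_suminf_le[OF cb gsum])
    also have "\<dots> = (\<Sum>j. (1/3::real)^j) * norm y" by (rule suminf_mult2[OF geo, symmetric])
    finally show "norm (g y) \<le> norm y * (3/2)" using geos by simp
  qed
  have gx: "g (x m) \<noteq> 0" for m
  proof -
    define f where "f j = c j (x m)" for j
    have fs': "summable f" unfolding f_def by (rule csum)
    have f0: "f j = 0" if "j < m" for j using xp(3)[OF that] unfolding f_def c_def by simp
    have "sum f {..<m} = 0" using f0 by simp
    then have e1: "g (x m) = (\<Sum>n. f (n + m))"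
      using suminf_minus_initial_segment[OF fs', of m] unfolding g_def f_def by simp
    have fs2: "summable (\<lambda>n. f (n + m))" by (rule summable_ignore_initial_segment[OF fs'])
    have e2: "(\<Sum>n. f (n + m)) = f m + (\<Sum>n. f (Suc n + m))"
      using suminf_split_head[OF fs2] by simp
    have "norm (\<Sum>n. f (Suc n + m)) \<le> (\<Sum>n. (1/3::real)^n * ((1/3)^(Suc m) * norm (x m)))"
    proof (rule norm_suminf_le)
      fix n show "norm (f (Suc n + m)) \<le> (1/3::real)^n * ((1/3)^(Suc m) * norm (x m))"
        using cb[of "Suc n + m" "x m"] unfolding f_def by (simp add: power_add algebra_simps)
    next
      show "summable (\<lambda>n. (1/3::real)^n * ((1/3)^(Suc m) * norm (x m)))"
        by (rule summable_mult2[OF geo])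
    qed
    also have "\<dots> = (\<Sum>n. (1/3::real)^n) * ((1/3)^(Suc m) * norm (x m))"
      by (rule suminf_mult2[OF geo, symmetric])
    also have "\<dots> = (1/3)^m * norm (x m) / 2" using geos by simp
    finally have tail: "\<bar>\<Sum>n. f (Suc n + m)\<bar> \<le> (1/3)^m * norm (x m) / 2" by simp
    have fm: "f m = (1/3)^m * norm (x m)" unfolding f_def c_def using \<phi>(2) by simp
    have "(1/3::real)^m * norm (x m) > 0" using xnz by simp
    then have "g (x m) > 0" using e1 e2 tail fm by linarith
    then show ?thesis by simp
  qed
  have "range x \<subseteq> {a\<in>A. g a \<noteq> 0}" using xp(1) gx by auto
  moreover have "infinite (range x)" using inj by (rule range_inj_infinite)
  ultimately show False using fs[OF \<open>bounded_linear g\<close>] finite_subset by blast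
qed
end
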